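(* Let $\triangle ABC$ be a triangle with side lengths $a=|BC|$, $b=|CA|$, $c=|AB|$ satisfying $a>b>c$, and with angles $\alpha=\angle A$, $\beta=\angle B$, $\gamma=\angle C$ (so $\alpha>\beta>\gamma$). For each side $x\in\{a,b,c\}$ that admits an inscribed equilateral triangle with one side lying on $x$, let $T_x$ be such an inscribed equilateral triangle of largest area on side $x$. Then: (Max) Among the sides admitting such a triangle, the largest area of $T_x$ is attained exactly on the long side $a$ when $\beta\neq 60^\circ$, and exactly on the sides $a$ and $c$ when $\beta=60^\circ$. (Min) The smallest area of $T_x$ (over the sides admitting such a triangle) is attained: A. exactly on side $c$ when $\alpha>120^\circ$, and exactly on sides $b$ and $c$ when $\alpha=120^\circ$; B. exactly on side $b$ when $60^\circ<\alpha<120^\circ$ and $\beta<60^\circ$; C. exactly on side $b$ when $\beta\ge 60^\circ$.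
   Context: An equilateral triangle is inscribed in $\triangle ABC$ if all three of its vertices lie on the boundary of $\triangle ABC$. An inscribed equilateral triangle "on side $x$" is one having one of its sides contained in the side $x$ of $\triangle ABC$. If both angles of $\triangle ABC$ at the endpoints of side $x$ exceed $60^\circ$, no inscribed equilateral triangle exists on that side, and that side is excluded from the comparison. The inscribed equilateral triangle of largest area among the (at most three) triangles $T_a,T_b,T_c$ is called the max inscribed equilateral triangle, and the one of smallest area the min inscribed equilateral triangle. *)

theory Defs
  imports "HOL-Analysis.Analysis"
begin

definition vec_angle :: "complex \<Rightarrow> complex \<Rightarrow> real" where
  "vec_angle u v = arccos ((u \<bullet> v) / (norm u * norm v))"

definition tri_angle :: "complex \<Rightarrow> complex \<Rightarrow> complex \<Rightarrow> real" where
  "tri_angle X V Y = vec_angle (X - V) (Y - V)"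

definition tri_area :: "complex \<Rightarrow> complex \<Rightarrow> complex \<Rightarrow> real" where
  "tri_area P Q R = \<bar>Im ((Q - P) * cnj (R - P))\<bar> / 2"

definition equilateral :: "complex \<Rightarrow> complex \<Rightarrow> complex \<Rightarrow> bool" where
  "equilateral P Q R \<longleftrightarrow> P \<noteq> Q \<and> dist P Q = dist Q R \<and> dist Q R = dist R P"

definition tri_boundary :: "complex \<Rightarrow> complex \<Rightarrow> complex \<Rightarrow> complex set" where
  "tri_boundary A B C = closed_segment A B \<union> closed_segment B C \<union> closed_segment C A"

datatype side = SideA | SideB | SideC

fun side_seg :: "complex \<Rightarrow> complex \<Rightarrow> complex \<Rightarrow> side \<Rightarrow> complex set" where
  "side_seg A B C SideA = closed_segment B C"
| "side_seg A B C SideB = closed_segment C A"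
| "side_seg A B C SideC = closed_segment A B"

definition inscribed_eq_on_side ::
  "complex \<Rightarrow> complex \<Rightarrow> complex \<Rightarrow> side \<Rightarrow> complex \<Rightarrow> complex \<Rightarrow> complex \<Rightarrow> bool" where
  "inscribed_eq_on_side A B C x P Q R \<longleftrightarrow>
     equilateral P Q R \<and> P \<in> tri_boundary A B C \<and> Q \<in> tri_boundary A B C \<and>
     R \<in> tri_boundary A B C \<and> closed_segment P Q \<subseteq> side_seg A B C x"

definition admits_eq :: "complex \<Rightarrow> complex \<Rightarrow> complex \<Rightarrow> side \<Rightarrow> bool" where
  "admits_eq A B C x \<longleftrightarrow> (\<exists>P Q R. inscribed_eq_on_side A B C x P Q R)"

definition max_eq_area :: "complex \<Rightarrow> complex \<Rightarrow> complex \<Rightarrow> side \<Rightarrow> real" where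
  "max_eq_area A B C x =
     Sup {tri_area P Q R | P Q R. inscribed_eq_on_side A B C x P Q R}"

definition max_sides :: "complex \<Rightarrow> complex \<Rightarrow> complex \<Rightarrow> side set" where
  "max_sides A B C = {x. admits_eq A B C x \<and>
     (\<forall>y. admits_eq A B C y \<longrightarrow> max_eq_area A B C y \<le> max_eq_area A B C x)}"

definition min_sides :: "complex \<Rightarrow> complex \<Rightarrow> complex \<Rightarrow> side set" where
  "min_sides A B C = {x. admits_eq A B C x \<and>
     (\<forall>y. admits_eq A B C y \<longrightarrow> max_eq_area A B C x \<le> max_eq_area A B C y)}"

end

theory Submission
  imports Defs
begin



definition gfun :: "real \<Rightarrow> real \<Rightarrow> real \<Rightarrow> real" where
  "gfun L d D = (if sqrt 3 * d \<ge> D then min (2*D/(sqrt 3 * L)) (2*L*D/(sqrt 3 * d + D)) else 0)"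

definition ins3 :: "complex \<Rightarrow> complex \<Rightarrow> complex \<Rightarrow> complex \<Rightarrow> complex \<Rightarrow> complex \<Rightarrow> bool" where
  "ins3 U V W P Q R \<longleftrightarrow> equilateral P Q R \<and>
     P \<in> closed_segment U V \<union> closed_segment V W \<union> closed_segment W U \<and>
     Q \<in> closed_segment U V \<union> closed_segment V W \<union> closed_segment W U \<and>
     R \<in> closed_segment U V \<union> closed_segment V W \<union> closed_segment W U \<and>
     closed_segment P Q \<subseteq> closed_segment U V"

lemma r3: "sqrt 3 > 0" "sqrt 3 * sqrt 3 = 3" "(sqrt 3)^2 = 3" by auto

lemma dist_sq: "(dist (P::complex) Q)^2 = (Re P - Re Q)^2 + (Im P - Im Q)^2"
  by (simp add: dist_norm cmod_def)

lemma seg_iff: "(z::complex) \<in> closed_segment a b \<longleftrightarrow>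
  (\<exists>u. 0 \<le> u \<and> u \<le> 1 \<and> Re z = (1-u)*Re a + u*Re b \<and> Im z = (1-u)*Im a + u*Im b)"
  unfolding in_segment by (auto simp: complex_eq_iff scaleR_conv_of_real)

lemma seg01: "(z::complex) \<in> closed_segment 0 1 \<longleftrightarrow> Im z = 0 \<and> 0 \<le> Re z \<and> Re z \<le> 1"
  unfolding seg_iff by auto

lemma RL:
  fixes x1 x2 t p q X Y :: real
  assumes "0 \<le> x1" "x1 \<le> 1" "0 \<le> x2" "x2 \<le> 1" "x1 \<noteq> x2" "0 \<le> t" "t \<le> 1" "q > 0"
    "X = t*p" "Y = t*q"
    "(X-x2)^2 + Y^2 = (x1-x2)^2" "(X-x1)^2 + Y^2 = (x1-x2)^2"
  shows "sqrt 3 * p \<ge> q \<and> \<bar>x1-x2\<bar> \<le> gfun 1 p q"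
proof -
  define s where "s = \<bar>x1-x2\<bar>"
  define r where "r = sqrt 3"
  have r: "r > 0" "r*r = 3" using r3 by (auto simp: r_def)
  have s0: "s > 0" using assms(5) s_def by auto
  have "(X-x2)^2 = (X-x1)^2" using assms(11,12) by linarith
  hence "(x1 - x2) * (2*X - x1 - x2) = 0" by (simp add: power2_eq_square algebra_simps)
  hence X: "X = (x1+x2)/2" using assms(5) by simp
  have ss: "s^2 = (x1-x2)^2" by (simp add: s_def)
  have Y0: "Y \<ge> 0" using assms(6,8,10) by simp
  have "Y^2 = 3/4 * s^2" using assms(12) X ss by (simp add: power2_eq_square field_simps)
  hence "Y^2 = (r * s / 2)^2" using r by (simp add: power2_eq_square field_simps)
  hence Y: "Y = r * s / 2" using Y0 r s0 by (simp add: power2_eq_iff_nonneg)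
  have t0: "t > 0" using Y assms(6,10) r s0 by (cases "t = 0") auto
  have lo: "X - s/2 \<ge> 0" using X s_def assms(1-4) by (auto simp: abs_if)
  have hi: "X + s/2 \<le> 1" unfolding X s_def using assms(1-4) by (simp add: abs_if field_simps)
  have hs: "s/2 = t*q/r" using Y assms(10) r by (simp add: field_simps)
  have "t*p \<ge> t*q/r" using lo hs assms(9) by simp
  hence "t*q \<le> t*(r*p)" using r by (simp add: divide_le_eq mult.commute mult.left_commute)
  hence c1: "r*p \<ge> q" using t0 by simp
  have g: "gfun 1 p q = min (2*q/r) (2*q/(r*p+q))" using c1 by (simp add: gfun_def r_def)
  have b1: "s \<le> 2*q/r" using hs assms(7,8) r by (simp add: field_simps)
  have "s*(r*p+q) = 2*q*(X + s/2)" using hs assms(9) r by (simp add: field_simps)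
  also have "\<dots> \<le> 2*q" using hi assms(8) by simp
  finally have "s*(r*p+q) \<le> 2*q" .
  hence b2: "s \<le> 2*q/(r*p+q)" using r c1 assms(8) by (simp add: field_simps)
  show ?thesis using c1 b1 b2 g by (simp add: r_def s_def)
qed


lemma N1:
  assumes q: "Im w > 0" and ins: "ins3 0 1 w P Q R"
  shows "(sqrt 3 * Re w \<ge> Im w \<or> sqrt 3 * (1 - Re w) \<ge> Im w) \<and>
         dist P Q \<le> max (gfun 1 (Re w) (Im w)) (gfun 1 (1 - Re w) (Im w))"
proof -
  have eq: "equilateral P Q R" and sub: "closed_segment P Q \<subseteq> closed_segment 0 1"
    and Rb: "R \<in> closed_segment 0 1 \<union> closed_segment 1 w \<union> closed_segment w 0"
    using ins unfolding ins3_def by auto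
  have P: "Im P = 0" "0 \<le> Re P" "Re P \<le> 1" using sub seg01[of P] ends_in_segment(1)[of P Q] by auto
  have Q: "Im Q = 0" "0 \<le> Re Q" "Re Q \<le> 1" using sub seg01[of Q] ends_in_segment(2)[of P Q] by auto
  have ne: "Re P \<noteq> Re Q" using eq P Q unfolding equilateral_def by (auto simp: complex_eq_iff)
  have dPQ: "dist P Q = \<bar>Re P - Re Q\<bar>" using P Q by (simp add: dist_norm cmod_def)
  have d1: "dist Q R = dist P Q" "dist R P = dist P Q" using eq unfolding equilateral_def by auto
  have e1: "(Re R - Re Q)^2 + (Im R)^2 = (Re P - Re Q)^2"
    using d1(1) dist_sq[of Q R] dist_sq[of P Q] P Q by (simp add: power2_commute)
  have e2: "(Re R - Re P)^2 + (Im R)^2 = (Re P - Re Q)^2"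
    using d1(2) dist_sq[of R P] dist_sq[of P Q] P Q by simp
  consider "R \<in> closed_segment 0 1" | "R \<in> closed_segment 1 w" | "R \<in> closed_segment w 0"
    using Rb by blast
  then show ?thesis
  proof cases
    case 1
    hence "Im R = 0" using seg01 by auto
    hence "(Re R - Re Q)^2 = (Re R - Re P)^2" "(Re R - Re P)^2 = (Re P - Re Q)^2" using e1 e2 by auto
    hence h: "(Re P - Re Q) * (2 * Re R - Re P - Re Q) = 0" "(Re R - Re P)^2 = (Re P - Re Q)^2"
      by (auto simp: power2_eq_square algebra_simps)
    hence "Re R = (Re P + Re Q)/2" using ne by simp
    hence "(Re P - Re Q)^2 * 3 = 0" using h(2) by (simp add: power2_eq_square field_simps) algebra
    hence False using ne by simp
    thus ?thesis ..
  next
    case 2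
    then obtain u where u: "0 \<le> u" "u \<le> 1" "Re R = (1-u) + u * Re w" "Im R = u * Im w"
      unfolding seg_iff by auto
    have "sqrt 3 * (1 - Re w) \<ge> Im w \<and> \<bar>(1 - Re P) - (1 - Re Q)\<bar> \<le> gfun 1 (1 - Re w) (Im w)"
      apply (rule RL[where t=u and X="1 - Re R" and Y="Im R"])
      using u P Q ne q e1 e2 by (auto simp: algebra_simps power2_commute)
    thus ?thesis using dPQ by auto
  next
    case 3
    then obtain u where u: "0 \<le> u" "u \<le> 1" "Re R = (1-u) * Re w" "Im R = (1-u) * Im w"
      unfolding seg_iff by auto
    have "sqrt 3 * Re w \<ge> Im w \<and> \<bar>Re P - Re Q\<bar> \<le> gfun 1 (Re w) (Im w)"
      apply (rule RL[where t="1-u" and X="Re R" and Y="Im R"])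
      using u P Q ne q e1 e2 by (auto simp: algebra_simps power2_commute)
    thus ?thesis using dPQ by auto
  qed
qed




lemma N2:
  assumes q: "Im w > 0" and Rb: "R \<in> closed_segment 1 w \<union> closed_segment w 0"
    and s: "s > 0" "Im R = sqrt 3 / 2 * s" "0 \<le> Re R - s/2" "Re R + s/2 \<le> 1"
  shows "ins3 0 1 w (of_real (Re R - s/2)) (of_real (Re R + s/2)) R \<and>
         dist (of_real (Re R - s/2) :: complex) (of_real (Re R + s/2)) = s"
proof -
  define P :: complex where "P = of_real (Re R - s/2)"
  define Q :: complex where "Q = of_real (Re R + s/2)"
  have P01: "P \<in> closed_segment 0 1" using s by (simp add: seg01 P_def)
  have Q01: "Q \<in> closed_segment 0 1" using s by (simp add: seg01 Q_def)
  have sub: "closed_segment P Q \<subseteq> closed_segment 0 1"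
    by (rule closed_segment_subset[OF P01 Q01 convex_closed_segment])
  have dPQ: "dist P Q = s" using s by (simp add: P_def Q_def dist_norm cmod_def)
  have "(Im R)^2 = (sqrt 3 / 2 * s)^2" by (simp only: s(2))
  also have "\<dots> = 3/4 * s^2" by (simp add: power_mult_distrib power_divide)
  finally have imsq: "(Im R)^2 = 3/4 * s^2" .
  have "(dist Q R)^2 = s^2" using s imsq unfolding dist_sq by (simp add: Q_def power2_eq_square field_simps)
  hence dQR: "dist Q R = s" using s by (simp add: power2_eq_iff_nonneg)
  have "(dist R P)^2 = s^2" using s imsq unfolding dist_sq by (simp add: P_def power2_eq_square field_simps)
  hence dRP: "dist R P = s" using s by (simp add: power2_eq_iff_nonneg)
  have "P \<noteq> Q" using s by (simp add: P_def Q_def)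
  hence "equilateral P Q R" using dPQ dQR dRP by (simp add: equilateral_def)
  hence "ins3 0 1 w P Q R" using P01 Q01 Rb sub by (auto simp: ins3_def)
  thus ?thesis using dPQ by (simp add: P_def Q_def)
qed

lemma gfun_nonneg: "D > 0 \<Longrightarrow> L > 0 \<Longrightarrow> gfun L d D \<ge> 0"
  unfolding gfun_def using r3 by (auto simp: min_def intro!: divide_nonneg_pos add_pos_nonneg)

lemma N2a:
  assumes q: "Im w > 0" and c: "sqrt 3 * Re w \<ge> Im w"
  shows "\<exists>P Q R. ins3 0 1 w P Q R \<and> dist P Q = gfun 1 (Re w) (Im w)"
proof -
  define r where "r = sqrt 3"
  define p where "p = Re w"
  define qq where "qq = Im w"
  have r: "r > 0" "r*r = 3" using r3 by (auto simp: r_def)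
  have q0: "qq > 0" using q qq_def by simp
  have c': "r*p \<ge> qq" using c by (simp add: r_def p_def qq_def)
  have den: "r*p + qq > 0" using c' q0 by linarith
  define t where "t = min 1 (r/(r*p+qq))"
  have t12: "t > 0" "t \<le> 1" "t \<le> r/(r*p+qq)" using r den
    by (auto simp: t_def)
  have "t*(r*p+qq) \<le> (r/(r*p+qq))*(r*p+qq)" by (rule mult_right_mono[OF t12(3)]) (use den in auto)
  hence t: "t > 0" "t \<le> 1" "t*(r*p+qq) \<le> r" using t12 den by auto
  define s where "s = 2*t*qq/r"
  define R where "R = (1 - (1-t)) *\<^sub>R w + (1-t) *\<^sub>R (0::complex)"
  have Rseg: "R \<in> closed_segment w 0" unfolding in_segment R_def using t
    by (intro exI[of _ "1-t"]) auto
  have ReR: "Re R = t*p" and ImR: "Im R = t*qq" by (simp_all add: R_def p_def qq_def)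
  have s0: "s > 0" using t q0 r by (simp add: s_def)
  have hs: "s/2 = t*qq/r" by (simp add: s_def)
  have "r*(s/2) = t*qq" using hs r by (simp add: field_simps)
  also have "\<dots> \<le> t*(r*p)" using c' t by (simp add: mult_left_mono)
  finally have "r*(s/2) \<le> r*(t*p)" by (simp add: algebra_simps)
  hence "s/2 \<le> t*p" using r by simp
  have "r*(s/2 + t*p) = t*(r*p+qq)" using hs r by (simp add: field_simps)
  also have "\<dots> \<le> r" using t by simp
  finally have "r*(s/2 + t*p) \<le> r*1" by simp
  hence "s/2 + t*p \<le> 1" using r by (simp only: mult_le_cancel_left_pos)
  have lo: "0 \<le> Re R - s/2" using ReR \<open>s/2 \<le> t*p\<close> \<open>s/2 + t*p \<le> 1\<close> by simp
  have hi: "Re R + s/2 \<le> 1" using ReR \<open>s/2 + t*p \<le> 1\<close> by simp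
  have im: "Im R = sqrt 3 / 2 * s" using ImR r by (simp add: s_def r_def[symmetric] field_simps)
  have gv: "gfun 1 (Re w) (Im w) = s"
  proof -
    have g: "gfun 1 (Re w) (Im w) = min (2*qq/r) (2*qq/(r*p+qq))"
      using c by (simp add: gfun_def r_def p_def qq_def)
    show ?thesis unfolding g s_def
    proof (cases "r*p+qq \<le> r")
      case True
      hence "r/(r*p+qq) \<ge> 1" using den by simp
      hence "t = 1" by (simp add: t_def)
      moreover have "2*qq/r \<le> 2*qq/(r*p+qq)" using True den q0 r
        by (intro divide_left_mono) auto
      ultimately show "min (2*qq/r) (2*qq/(r*p+qq)) = 2*t*qq/r" by simp
    next
      case False
      hence "r/(r*p+qq) < 1" using den by simp
      hence tv: "t = r/(r*p+qq)" by (simp add: t_def)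
      have "2*t*qq/r = 2*qq/(r*p+qq)" 
      proof -
        have "\<And>d. d > 0 \<Longrightarrow> 2*(r/d)*qq/r = 2*qq/d" using r(1) by simp
        thus ?thesis unfolding tv using den by blast
      qed
      moreover have "2*qq/r > 2*qq/(r*p+qq)" using False den q0 r
        by (intro divide_strict_left_mono) auto
      ultimately show "min (2*qq/r) (2*qq/(r*p+qq)) = 2*t*qq/r" by simp
    qed
  qed
  show ?thesis using N2[OF q _ s0 im lo hi] Rseg gv by blast
qed

lemma N2b:
  assumes q: "Im w > 0" and c: "sqrt 3 * (1 - Re w) \<ge> Im w"
  shows "\<exists>P Q R. ins3 0 1 w P Q R \<and> dist P Q = gfun 1 (1 - Re w) (Im w)"
proof -
  define r where "r = sqrt 3"
  define p where "p = 1 - Re w"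
  define qq where "qq = Im w"
  have r: "r > 0" "r*r = 3" using r3 by (auto simp: r_def)
  have q0: "qq > 0" using q qq_def by simp
  have c': "r*p \<ge> qq" using c by (simp add: r_def p_def qq_def)
  have den: "r*p + qq > 0" using c' q0 by linarith
  define t where "t = min 1 (r/(r*p+qq))"
  have t12: "t > 0" "t \<le> 1" "t \<le> r/(r*p+qq)" using r den
    by (auto simp: t_def)
  have "t*(r*p+qq) \<le> (r/(r*p+qq))*(r*p+qq)" by (rule mult_right_mono[OF t12(3)]) (use den in auto)
  hence t: "t > 0" "t \<le> 1" "t*(r*p+qq) \<le> r" using t12 den by auto
  define s where "s = 2*t*qq/r"
  define R where "R = (1 - t) *\<^sub>R (1::complex) + t *\<^sub>R w"
  have Rseg: "R \<in> closed_segment 1 w" unfolding in_segment R_def using t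
    by (intro exI[of _ "t"]) auto
  have ReR: "Re R = 1 - t*p" and ImR: "Im R = t*qq" by (simp_all add: R_def p_def qq_def algebra_simps)
  have s0: "s > 0" using t q0 r by (simp add: s_def)
  have hs: "s/2 = t*qq/r" by (simp add: s_def)
  have "r*(s/2) = t*qq" using hs r by (simp add: field_simps)
  also have "\<dots> \<le> t*(r*p)" using c' t by (simp add: mult_left_mono)
  finally have "r*(s/2) \<le> r*(t*p)" by (simp add: algebra_simps)
  hence "s/2 \<le> t*p" using r by simp
  have "r*(s/2 + t*p) = t*(r*p+qq)" using hs r by (simp add: field_simps)
  also have "\<dots> \<le> r" using t by simp
  finally have "r*(s/2 + t*p) \<le> r*1" by simp
  hence "s/2 + t*p \<le> 1" using r by (simp only: mult_le_cancel_left_pos)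
  have lo: "0 \<le> Re R - s/2" using ReR \<open>s/2 \<le> t*p\<close> \<open>s/2 + t*p \<le> 1\<close> by simp
  have hi: "Re R + s/2 \<le> 1" using ReR \<open>s/2 \<le> t*p\<close> by simp
  have im: "Im R = sqrt 3 / 2 * s" using ImR r by (simp add: s_def r_def[symmetric] field_simps)
  have gv: "gfun 1 (1 - Re w) (Im w) = s"
  proof -
    have g: "gfun 1 (1 - Re w) (Im w) = min (2*qq/r) (2*qq/(r*p+qq))"
      using c by (simp add: gfun_def r_def p_def qq_def)
    show ?thesis unfolding g s_def
    proof (cases "r*p+qq \<le> r")
      case True
      hence "r/(r*p+qq) \<ge> 1" using den by simp
      hence "t = 1" by (simp add: t_def)
      moreover have "2*qq/r \<le> 2*qq/(r*p+qq)" using True den q0 r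
        by (intro divide_left_mono) auto
      ultimately show "min (2*qq/r) (2*qq/(r*p+qq)) = 2*t*qq/r" by simp
    next
      case False
      hence "r/(r*p+qq) < 1" using den by simp
      hence tv: "t = r/(r*p+qq)" by (simp add: t_def)
      have "2*t*qq/r = 2*qq/(r*p+qq)" 
      proof -
        have "\<And>d. d > 0 \<Longrightarrow> 2*(r/d)*qq/r = 2*qq/d" using r(1) by simp
        thus ?thesis unfolding tv using den by blast
      qed
      moreover have "2*qq/r > 2*qq/(r*p+qq)" using False den q0 r
        by (intro divide_strict_left_mono) auto
      ultimately show "min (2*qq/r) (2*qq/(r*p+qq)) = 2*t*qq/r" by simp
    qed
  qed
  show ?thesis using N2[OF q _ s0 im lo hi] Rseg gv by blast
qed




lemma Nfull:
  assumes q: "Im w > 0"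
  shows "ins3 0 1 w P Q R \<Longrightarrow> (sqrt 3 * Re w \<ge> Im w \<or> sqrt 3 * (1 - Re w) \<ge> Im w) \<and>
         dist P Q \<le> max (gfun 1 (Re w) (Im w)) (gfun 1 (1 - Re w) (Im w))"
    and "(sqrt 3 * Re w \<ge> Im w \<or> sqrt 3 * (1 - Re w) \<ge> Im w) \<Longrightarrow>
         \<exists>P Q R. ins3 0 1 w P Q R \<and> dist P Q = max (gfun 1 (Re w) (Im w)) (gfun 1 (1 - Re w) (Im w))"
proof -
  show "ins3 0 1 w P Q R \<Longrightarrow> (sqrt 3 * Re w \<ge> Im w \<or> sqrt 3 * (1 - Re w) \<ge> Im w) \<and>
         dist P Q \<le> max (gfun 1 (Re w) (Im w)) (gfun 1 (1 - Re w) (Im w))"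
    using N1[OF q] by blast
next
  assume adm: "sqrt 3 * Re w \<ge> Im w \<or> sqrt 3 * (1 - Re w) \<ge> Im w"
  have n0: "gfun 1 (Re w) (Im w) \<ge> 0" "gfun 1 (1 - Re w) (Im w) \<ge> 0"
    using gfun_nonneg q by auto
  show "\<exists>P Q R. ins3 0 1 w P Q R \<and> dist P Q = max (gfun 1 (Re w) (Im w)) (gfun 1 (1 - Re w) (Im w))"
  proof (cases "sqrt 3 * Re w \<ge> Im w \<and> gfun 1 (Re w) (Im w) \<ge> gfun 1 (1 - Re w) (Im w)")
    case True
    hence "max (gfun 1 (Re w) (Im w)) (gfun 1 (1 - Re w) (Im w)) = gfun 1 (Re w) (Im w)"
      by (simp add: max_def)
    thus ?thesis using N2a[OF q] True by simp
  next
    case False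
    show ?thesis
    proof (cases "sqrt 3 * (1 - Re w) \<ge> Im w")
      case True
      have "max (gfun 1 (Re w) (Im w)) (gfun 1 (1 - Re w) (Im w)) = gfun 1 (1 - Re w) (Im w)"
      proof -
        have z: "\<not> sqrt 3 * Re w \<ge> Im w \<Longrightarrow> gfun 1 (Re w) (Im w) = 0" by (simp add: gfun_def)
        show ?thesis using False n0 z by (auto simp: max_def)
      qed
      thus ?thesis using N2b[OF q True] by simp
    next
      case F2: False
      have "max (gfun 1 (Re w) (Im w)) (gfun 1 (1 - Re w) (Im w)) = gfun 1 (Re w) (Im w)"
      proof -
        have z: "gfun 1 (1 - Re w) (Im w) = 0" using F2 by (simp add: gfun_def)
        show ?thesis using n0 z by (auto simp: max_def)
      qed
      thus ?thesis using N2a[OF q] adm F2 by simp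
    qed
  qed
qed

lemma aff_seg:
  assumes aff: "\<And>x y u. f ((1-u) *\<^sub>R x + u *\<^sub>R y) = (1-u) *\<^sub>R f x + u *\<^sub>R f y"
    and inv: "\<And>z. f (h z) = z" "\<And>z. h (f z) = z"
  shows "f z \<in> closed_segment (f x) (f y) \<longleftrightarrow> z \<in> closed_segment x y"
proof
  assume "f z \<in> closed_segment (f x) (f y)"
  then obtain u where u: "0 \<le> u" "u \<le> 1" "f z = (1-u) *\<^sub>R f x + u *\<^sub>R f y"
    unfolding in_segment by auto
  hence "f z = f ((1-u) *\<^sub>R x + u *\<^sub>R y)" using aff by simp
  hence "h (f z) = h (f ((1-u) *\<^sub>R x + u *\<^sub>R y))" by simp
  hence "z = (1-u) *\<^sub>R x + u *\<^sub>R y" using inv(2) by simp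
  thus "z \<in> closed_segment x y" using u unfolding in_segment by auto
next
  assume "z \<in> closed_segment x y"
  then obtain u where u: "0 \<le> u" "u \<le> 1" "z = (1-u) *\<^sub>R x + u *\<^sub>R y"
    unfolding in_segment by auto
  thus "f z \<in> closed_segment (f x) (f y)" using aff unfolding in_segment by auto
qed

lemma ins3_transfer:
  assumes aff: "\<And>x y u. f ((1-u) *\<^sub>R x + u *\<^sub>R y) = (1-u) *\<^sub>R f x + u *\<^sub>R f y"
    and inv: "\<And>z. f (h z) = z" "\<And>z. h (f z) = z"
    and d: "\<And>x y. dist (f x) (f y) = k * dist x y" and k: "k > 0"
  shows "ins3 (f U) (f V) (f W) (f P) (f Q) (f R) \<longleftrightarrow> ins3 U V W P Q R"
proof -
  note as = aff_seg[OF aff inv]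
  have eq: "equilateral (f P) (f Q) (f R) \<longleftrightarrow> equilateral P Q R"
  proof -
    have "f P = f Q \<longleftrightarrow> P = Q" by (metis inv(2))
    thus ?thesis unfolding equilateral_def d using k by simp
  qed
  have sub: "closed_segment (f P) (f Q) \<subseteq> closed_segment (f U) (f V) \<longleftrightarrow>
             closed_segment P Q \<subseteq> closed_segment U V"
  proof
    assume h1: "closed_segment (f P) (f Q) \<subseteq> closed_segment (f U) (f V)"
    show "closed_segment P Q \<subseteq> closed_segment U V"
    proof
      fix z assume "z \<in> closed_segment P Q"
      hence "f z \<in> closed_segment (f P) (f Q)" using as by blast
      hence "f z \<in> closed_segment (f U) (f V)" using h1 by blast
      thus "z \<in> closed_segment U V" using as by blast
    qed
  next
    assume h1: "closed_segment P Q \<subseteq> closed_segment U V"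
    show "closed_segment (f P) (f Q) \<subseteq> closed_segment (f U) (f V)"
    proof
      fix z assume "z \<in> closed_segment (f P) (f Q)"
      hence "f (h z) \<in> closed_segment (f P) (f Q)" using inv by simp
      hence "h z \<in> closed_segment P Q" using as by blast
      hence "h z \<in> closed_segment U V" using h1 by blast
      hence "f (h z) \<in> closed_segment (f U) (f V)" using as by blast
      thus "z \<in> closed_segment (f U) (f V)" using inv by simp
    qed
  qed
  show ?thesis unfolding ins3_def eq sub Un_iff as by blast
qed





lemma w0_facts:
  fixes U V W :: complex
  assumes "V \<noteq> U"
  shows "Re ((W-U)/(V-U)) = ((W-U) \<bullet> (V-U)) / (cmod (V-U))^2"
    and "Im ((W-U)/(V-U)) = - Im ((V-U) * cnj (W-U)) / (cmod (V-U))^2"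
  using assms by (simp_all add: Re_divide Im_divide inner_complex_def cmod_power2 algebra_simps)




lemma gfun_scale:
  assumes L: "L > 0" and D: "D > 0"
  shows "L * gfun 1 (d/L^2) (D/L^2) = gfun L d D"
proof -
  have L2: "L^2 > 0" using L by simp
  have c: "sqrt 3 * (d/L^2) \<ge> D/L^2 \<longleftrightarrow> sqrt 3 * d \<ge> D" using L2
    by (simp add: divide_le_cancel)
  show ?thesis
  proof (cases "sqrt 3 * d \<ge> D")
    case True
    have den: "sqrt 3 * d + D > 0" using True D by linarith
    have e1: "L * (2 * (D/L^2) / (sqrt 3 * 1)) = 2*D/(sqrt 3 * L)" using L
      by (simp add: power2_eq_square field_simps)
    have e2: "L * (2 * 1 * (D/L^2) / (sqrt 3 * (d/L^2) + D/L^2)) = 2*L*D/(sqrt 3 * d + D)"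
    proof -
      have "sqrt 3 * (d/L^2) + D/L^2 = (sqrt 3 * d + D)/L^2" by (simp add: add_divide_distrib)
      thus ?thesis using L den by (simp add: power2_eq_square field_simps)
    qed
    have "L * gfun 1 (d/L^2) (D/L^2) = L * min (2 * (D/L^2) / (sqrt 3 * 1)) (2 * 1 * (D/L^2) / (sqrt 3 * (d/L^2) + D/L^2))"
      using True c by (simp add: gfun_def)
    also have "\<dots> = min (L * (2 * (D/L^2) / (sqrt 3 * 1))) (L * (2 * 1 * (D/L^2) / (sqrt 3 * (d/L^2) + D/L^2)))"
      using L by (simp add: min_mult_distrib_left)
    also have "\<dots> = gfun L d D" unfolding e1 e2 using True by (simp add: gfun_def)
    finally show ?thesis .
  next
    case False thus ?thesis using c by (simp add: gfun_def)
  qed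
qed

lemma simil:
  fixes U V W :: complex
  assumes nc: "Im ((V-U) * cnj (W-U)) \<noteq> 0"
  shows "\<exists>f h w. (\<forall>x y u. f ((1-u) *\<^sub>R x + u *\<^sub>R y) = (1-u) *\<^sub>R f x + u *\<^sub>R f y) \<and>
    (\<forall>z. f (h z) = z) \<and> (\<forall>z. h (f z) = z) \<and>
    (\<forall>x y. dist (f x) (f y) = cmod (V-U) * dist x y) \<and> f 0 = U \<and> f 1 = V \<and> f w = W \<and>
    Im w > 0 \<and> Re w = ((W-U) \<bullet> (V-U)) / (cmod (V-U))^2 \<and>
    Im w = \<bar>Im ((V-U) * cnj (W-U))\<bar> / (cmod (V-U))^2"
proof -
  define c where "c = V - U"
  have c0: "c \<noteq> 0" using nc by (auto simp: c_def)
  hence VU: "V \<noteq> U" by (simp add: c_def)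
  define w0 where "w0 = (W-U)/c"
  have fw0: "U + c * w0 = W" using c0 by (simp add: w0_def)
  have wf1: "Re w0 = ((W-U) \<bullet> (V-U)) / (cmod (V-U))^2"
    unfolding w0_def c_def by (rule w0_facts(1)[OF VU])
  have wf2: "Im w0 = - Im ((V-U) * cnj (W-U)) / (cmod (V-U))^2"
    unfolding w0_def c_def by (rule w0_facts(2)[OF VU])
  define k where "k = Im ((V-U) * cnj (W-U))"
  define L2 where "L2 = (cmod (V-U))^2"
  have Lp: "L2 > 0" using VU by (simp add: L2_def)
  have wf2': "Im w0 = - k / L2" using wf2 by (simp add: k_def L2_def)
  have k0: "k \<noteq> 0" using nc by (simp add: k_def)
  have aff1: "\<And>x y u. U + c * ((1-u) *\<^sub>R x + u *\<^sub>R y) = (1-u) *\<^sub>R (U + c * x) + u *\<^sub>R (U + c * y)"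
    by (simp add: scaleR_conv_of_real algebra_simps)
  have aff2: "\<And>x y u. U + c * cnj ((1-u) *\<^sub>R x + u *\<^sub>R y) = (1-u) *\<^sub>R (U + c * cnj x) + u *\<^sub>R (U + c * cnj y)"
    by (simp add: scaleR_conv_of_real algebra_simps)
  have d1: "\<And>x y. dist (U + c * x) (U + c * y) = cmod (V-U) * dist x y"
    by (simp add: dist_norm c_def norm_mult flip: right_diff_distrib)
  have d2: "\<And>x y. dist (U + c * cnj x) (U + c * cnj y) = cmod (V-U) * dist x y"
  proof -
    fix x y
    have "dist (U + c * cnj x) (U + c * cnj y) = cmod (c * cnj (x - y))"
      by (simp add: dist_norm right_diff_distrib)
    also have "\<dots> = cmod c * cmod (x - y)" by (simp only: norm_mult complex_mod_cnj)
    finally show "dist (U + c * cnj x) (U + c * cnj y) = cmod (V-U) * dist x y"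
      by (simp add: dist_norm c_def)
  qed
  show ?thesis
  proof (cases "Im w0 > 0")
    case True
    hence "k < 0" using wf2' Lp by (simp add: divide_less_0_iff)
    hence iw: "Im w0 = \<bar>k\<bar> / L2" using wf2' by simp
    show ?thesis
      apply (rule exI[of _ "\<lambda>z. U + c * z"], rule exI[of _ "\<lambda>z. (z - U) / c"], rule exI[of _ w0])
      using c0 True fw0 wf1 iw aff1 d1 by (auto simp: k_def L2_def c_def)
  next
    case False
    hence "Im w0 \<noteq> 0" using wf2' k0 Lp by auto
    hence neg: "Im w0 < 0" using False by simp
    hence "k > 0" using wf2' Lp by (simp add: zero_less_divide_iff)
    hence iw: "- Im w0 = \<bar>k\<bar> / L2" using wf2' by simp
    show ?thesis
      apply (rule exI[of _ "\<lambda>z. U + c * cnj z"], rule exI[of _ "\<lambda>z. cnj ((z - U) / c)"], rule exI[of _ "cnj w0"])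
      using c0 neg fw0 wf1 iw aff2 d2 by (auto simp: k_def L2_def c_def)
  qed
qed




lemma dsum: "((W-U) \<bullet> (V-U)) + ((W-V) \<bullet> (U-V)) = (cmod (V-U))^2"
  by (simp add: inner_complex_def cmod_power2) (simp add: power2_eq_square algebra_simps)

lemma general_side:
  fixes U V W :: complex
  assumes nc: "Im ((V-U) * cnj (W-U)) \<noteq> 0"
  defines "L \<equiv> cmod (V-U)" and "dU \<equiv> (W-U) \<bullet> (V-U)" and "dV \<equiv> (W-V) \<bullet> (U-V)"
    and "D \<equiv> \<bar>Im ((V-U) * cnj (W-U))\<bar>"
  shows "ins3 U V W P Q R \<Longrightarrow> (sqrt 3 * dU \<ge> D \<or> sqrt 3 * dV \<ge> D) \<and>
           dist P Q \<le> max (gfun L dU D) (gfun L dV D)"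
    and "(sqrt 3 * dU \<ge> D \<or> sqrt 3 * dV \<ge> D) \<Longrightarrow>
           \<exists>P Q R. ins3 U V W P Q R \<and> dist P Q = max (gfun L dU D) (gfun L dV D)"
proof -
  obtain f h w where aff: "\<And>x y u. f ((1-u) *\<^sub>R x + u *\<^sub>R y) = (1-u) *\<^sub>R f x + u *\<^sub>R f y"
    and inv: "\<And>z. f (h z) = z" "\<And>z. h (f z) = z"
    and d: "\<And>x y. dist (f x) (f y) = L * dist x y" and f0: "f 0 = U" "f 1 = V" "f w = W"
    and w: "Im w > 0" "Re w = dU / L^2" "Im w = D / L^2"
    using simil[OF nc] unfolding L_def dU_def D_def by blast
  have VU: "V \<noteq> U" using nc by auto
  have L: "L > 0" using VU by (simp add: L_def)
  have L2: "L^2 > 0" using L by simp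
  have D: "D > 0" using nc by (simp add: D_def)
  have w1: "1 - Re w = dV / L^2" using dsum[of W U V] w(2) L2
    by (simp add: L_def dU_def dV_def field_simps)
  have adm: "(sqrt 3 * Re w \<ge> Im w \<or> sqrt 3 * (1 - Re w) \<ge> Im w) \<longleftrightarrow>
             (sqrt 3 * dU \<ge> D \<or> sqrt 3 * dV \<ge> D)"
  proof -
    have "\<And>x. sqrt 3 * (x / L^2) \<ge> D / L^2 \<longleftrightarrow> sqrt 3 * x \<ge> D" using L2
      by (simp add: divide_le_cancel)
    thus ?thesis unfolding w1 unfolding w(2,3) by simp
  qed
  have G: "L * max (gfun 1 (Re w) (Im w)) (gfun 1 (1 - Re w) (Im w)) = max (gfun L dU D) (gfun L dV D)"
    unfolding w1 unfolding w(2,3) using gfun_scale[OF L D] L by (simp add: max_mult_distrib_left)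
  have tr: "\<And>P Q R. ins3 U V W P Q R \<longleftrightarrow> ins3 0 1 w (h P) (h Q) (h R)"
  proof -
    fix P Q R
    have "ins3 U V W P Q R \<longleftrightarrow> ins3 (f 0) (f 1) (f w) (f (h P)) (f (h Q)) (f (h R))"
      using f0 inv by simp
    also have "\<dots> \<longleftrightarrow> ins3 0 1 w (h P) (h Q) (h R)"
      by (rule ins3_transfer[OF aff inv d L])
    finally show "ins3 U V W P Q R \<longleftrightarrow> ins3 0 1 w (h P) (h Q) (h R)" .
  qed
  show "ins3 U V W P Q R \<Longrightarrow> (sqrt 3 * dU \<ge> D \<or> sqrt 3 * dV \<ge> D) \<and>
           dist P Q \<le> max (gfun L dU D) (gfun L dV D)"
  proof -
    assume "ins3 U V W P Q R"
    hence i: "ins3 0 1 w (h P) (h Q) (h R)" using tr by blast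
    note n = Nfull(1)[OF w(1) i]
    have "dist P Q = L * dist (h P) (h Q)" using d[of "h P" "h Q"] inv by simp
    also have "\<dots> \<le> L * max (gfun 1 (Re w) (Im w)) (gfun 1 (1 - Re w) (Im w))"
      using n L by (simp add: mult_left_mono)
    finally show ?thesis using n adm G by simp
  qed
  show "(sqrt 3 * dU \<ge> D \<or> sqrt 3 * dV \<ge> D) \<Longrightarrow>
           \<exists>P Q R. ins3 U V W P Q R \<and> dist P Q = max (gfun L dU D) (gfun L dV D)"
  proof -
    assume "sqrt 3 * dU \<ge> D \<or> sqrt 3 * dV \<ge> D"
    then obtain P Q R where i: "ins3 0 1 w P Q R"
      and dd: "dist P Q = max (gfun 1 (Re w) (Im w)) (gfun 1 (1 - Re w) (Im w))"
      using Nfull(2)[OF w(1)] adm by blast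
    have "ins3 U V W (f P) (f Q) (f R)" using tr i inv by simp
    moreover have "dist (f P) (f Q) = max (gfun L dU D) (gfun L dV D)" using d dd G by simp
    ultimately show ?thesis by blast
  qed
qed




lemma divcmp:
  fixes x y z w :: real
  assumes "y > 0" "w > 0"
  shows "x/y \<le> z/w \<longleftrightarrow> x*w \<le> z*y" "x/y < z/w \<longleftrightarrow> x*w < z*y" "x/y = z/w \<longleftrightarrow> x*w = z*y"
  using assms by (simp_all add: field_simps)

lemma g_eval:
  assumes c: "sqrt 3 * d \<ge> D" and D: "D > 0" and L: "L > 0" and s: "d + d' = L^2"
  shows "gfun L d D = (if sqrt 3 * d' \<ge> D then 2*D/(sqrt 3 * L) else 2*L*D/(sqrt 3*d + D))"
proof -
  define r where "r = sqrt 3"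
  have r: "r > 0" using r3 by (simp add: r_def)
  have den: "r*d + D > 0" using c D by (simp add: r_def)
  have "2*D/(r*L) \<le> 2*L*D/(r*d+D) \<longleftrightarrow> (2*D)*(r*d+D) \<le> (2*L*D)*(r*L)"
    using r L den by (simp add: divcmp)
  also have "\<dots> \<longleftrightarrow> (2*D)*(r*d+D) \<le> (2*D)*(r*L^2)" by (simp add: power2_eq_square algebra_simps)
  also have "\<dots> \<longleftrightarrow> r*d+D \<le> r*L^2" using D by simp
  also have "\<dots> \<longleftrightarrow> D \<le> r*d'" using s by (simp flip: s add: algebra_simps)
  finally have e: "2*D/(r*L) \<le> 2*L*D/(r*d+D) \<longleftrightarrow> D \<le> r*d'" .
  show ?thesis using c e unfolding gfun_def r_def by (auto simp: min_def)
qed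

lemma pos_gt: "(D::real) \<ge> 0 \<Longrightarrow> D^2 < 3 * d^2 \<Longrightarrow> d > 0 \<Longrightarrow> sqrt 3 * d > D"
proof -
  assume a: "D \<ge> 0" "D^2 < 3 * d^2" "d > 0"
  have "(sqrt 3 * d)^2 = 3 * d^2" by (simp add: power_mult_distrib)
  hence "D^2 < (sqrt 3 * d)^2" using a by simp
  thus ?thesis using power_less_imp_less_base[of D 2 "sqrt 3 * d"] a by simp
qed

lemma pos_lt: "(D::real) > 0 \<Longrightarrow> 3 * d^2 < D^2 \<Longrightarrow> sqrt 3 * d < D"
proof -
  assume a: "D > 0" "3 * d^2 < D^2"
  have "(sqrt 3 * d)^2 = 3 * d^2" by (simp add: power_mult_distrib)
  hence "(sqrt 3 * d)^2 < D^2" using a by simp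
  thus ?thesis using power_less_imp_less_base[of "sqrt 3 * d" 2 D] a by simp
qed

locale tri_facts =
  fixes a b c dA dB dC D :: real
  assumes ab: "a > b" and bc: "b > c" and c0: "c > 0" and D0: "D > 0"
    and s1: "dA + dB = c^2" and s2: "dB + dC = a^2" and s3: "dA + dC = b^2"
    and l1: "dA^2 + D^2 = b^2*c^2" and l2: "dB^2 + D^2 = a^2*c^2" and l3: "dC^2 + D^2 = a^2*b^2"
begin

lemma gam: "sqrt 3 * dC > D"
proof -
  have "2*dC = a^2 + b^2 - c^2" using s1 s2 s3 by linarith
  moreover have "b^2 > c^2" using bc c0 by (simp add: power_strict_mono)
  moreover have "a^2 > a*b" using ab bc c0 by (simp add: power2_eq_square)
  ultimately have h: "2*dC > a*b" by linarith
  have ab0: "a*b > 0" using ab bc c0 by simp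
  have "(a*b)^2 < (2*dC)^2" by (rule power_strict_mono[OF h]) (use ab0 in auto)
  hence "3*dC^2 > D^2" using l3 by (simp add: power_mult_distrib)
  thus ?thesis using pos_gt D0 h ab0 by simp
qed

lemma alp: "sqrt 3 * dA < D"
proof (cases "dA \<le> 0")
  case True
  have "sqrt 3 * dA \<le> 0" using True by (simp add: mult_nonneg_nonpos)
  thus ?thesis using D0 by linarith
next
  case False
  have "2*dA = b^2 + c^2 - a^2" using s1 s2 s3 by linarith
  moreover have "a^2 > b^2" using ab bc c0 by (simp add: power_strict_mono)
  moreover have "c^2 < b*c" using bc c0 by (simp add: power2_eq_square)
  ultimately have h: "2*dA < b*c" by linarith
  have "(2*dA)^2 < (b*c)^2" by (rule power_strict_mono[OF h]) (use False in auto)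
  hence "3*dA^2 < D^2" using l1 by (simp add: power_mult_distrib)
  thus ?thesis using pos_lt D0 by simp
qed


definition "Ga = max (gfun a dB D) (gfun a dC D)"
definition "Gb = max (gfun b dC D) (gfun b dA D)"
definition "Gc = max (gfun c dA D) (gfun c dB D)"

lemma pos: "a > 0" "b > 0" "sqrt 3 > 0" "sqrt 3 * sqrt 3 = 3" using ab bc c0 by auto

lemma Ga_val: "Ga = (if sqrt 3 * dB \<ge> D then 2*D/(sqrt 3 * a) else 2*a*D/(sqrt 3 * dC + D))"
proof (cases "sqrt 3 * dB \<ge> D")
  case True
  have "gfun a dB D = 2*D/(sqrt 3 * a)" using g_eval[OF True D0 pos(1) s2] gam by simp
  moreover have "gfun a dC D = 2*D/(sqrt 3 * a)" using g_eval[where d=dC and D=D and L=a and d'=dB] gam D0 pos(1) s2 True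
    by (simp add: add.commute)
  ultimately show ?thesis using True by (simp add: Ga_def)
next
  case False
  have "gfun a dB D = 0" using False by (simp add: gfun_def)
  moreover have "gfun a dC D = 2*a*D/(sqrt 3 * dC + D)" using g_eval[where d=dC and D=D and L=a and d'=dB] gam D0 pos(1) s2 False
    by (simp add: add.commute)
  moreover have "2*a*D/(sqrt 3 * dC + D) \<ge> 0" using gam D0 pos(1) by simp
  ultimately show ?thesis using False by (simp add: Ga_def)
qed

lemma Gb_val: "Gb = 2*b*D/(sqrt 3 * dC + D)"
proof -
  have "gfun b dA D = 0" using alp by (simp add: gfun_def)
  moreover have "gfun b dC D = 2*b*D/(sqrt 3 * dC + D)" using g_eval[where d=dC and D=D and L=b and d'=dA] gam D0 pos(2) s3 alp
    by (simp add: add.commute)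
  moreover have "2*b*D/(sqrt 3 * dC + D) \<ge> 0" using gam D0 pos(2) by simp
  ultimately show ?thesis by (simp add: Gb_def)
qed

lemma Gc_val: "sqrt 3 * dB \<ge> D \<Longrightarrow> Gc = 2*c*D/(sqrt 3 * dB + D)"
proof -
  assume h: "sqrt 3 * dB \<ge> D"
  have "gfun c dA D = 0" using alp by (simp add: gfun_def)
  moreover have "gfun c dB D = 2*c*D/(sqrt 3 * dB + D)" using g_eval[where d=dB and D=D and L=c and d'=dA] h D0 c0 s1 alp
    by (simp add: add.commute)
  moreover have "2*c*D/(sqrt 3 * dB + D) \<ge> 0" using h D0 c0 by simp
  ultimately show ?thesis by (simp add: Gc_def)
qed

lemma Gb_pos: "Gb > 0" using Gb_val gam D0 pos(2) by simp

lemma C1: "Ga > Gb"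
proof (cases "sqrt 3 * dB \<ge> D")
  case True
  define r where "r = sqrt 3"
  have r: "r > 0" "r*r = 3" using pos by (auto simp: r_def)
  have den: "r*dC + D > 0" using gam D0 by (simp add: r_def)
  have "(r*dC + D)^2 - (r*a*b)^2 = 2*D*(r*dC - D)" using l3 r(2) by algebra
  moreover have "2*D*(r*dC - D) > 0" using gam D0 by (simp add: r_def)
  ultimately have "(r*a*b)^2 < (r*dC + D)^2" by linarith
  hence lt: "r*a*b < r*dC + D" using power_less_imp_less_base[of "r*a*b" 2] den by simp
  have "Ga = 2*D/(r*a)" using Ga_val True by (simp add: r_def)
  moreover have "Gb = 2*b*D/(r*dC + D)" using Gb_val by (simp add: r_def)
  moreover have "2*b*D/(r*dC + D) < 2*D/(r*a)"
  proof -
    have "2*D*(r*a*b) < 2*D*(r*dC+D)" by (rule mult_strict_left_mono[OF lt]) (use D0 in simp)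
    hence "(2*b*D)*(r*a) < (2*D)*(r*dC+D)" by (simp add: algebra_simps)
    thus ?thesis using divcmp(2)[of "r*dC+D" "r*a" "2*b*D" "2*D"] den r pos by simp
  qed
  ultimately show ?thesis by simp
next
  case False
  have den: "sqrt 3*dC + D > 0" using gam D0 by simp
  have "Ga = 2*a*D/(sqrt 3*dC + D)" using Ga_val False by simp
  moreover have "2*b*D/(sqrt 3*dC + D) < 2*a*D/(sqrt 3*dC + D)"
    using den ab D0 by (simp add: divide_strict_right_mono)
  ultimately show ?thesis using Gb_val by simp
qed

lemma C2: assumes h: "sqrt 3 * dB \<ge> D" shows "Ga \<ge> Gc" "Ga = Gc \<longleftrightarrow> sqrt 3 * dB = D"
proof -
  define r where "r = sqrt 3"
  have r: "r > 0" "r*r = 3" using pos by (auto simp: r_def)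
  have h': "r*dB \<ge> D" using h by (simp add: r_def)
  have den: "r*dB + D > 0" using h' D0 by linarith
  have M0: "r*a*c > 0" using r pos c0 by simp
  have id: "(r*dB + D)^2 - (r*a*c)^2 = 2*D*(r*dB - D)" using l2 r(2) by algebra
  have ge: "r*a*c \<le> r*dB + D"
  proof -
    have "2*D*(r*dB - D) \<ge> 0" using h' D0 by simp
    hence "(r*a*c)^2 \<le> (r*dB + D)^2" using id by linarith
    thus ?thesis using power2_le_imp_le[of "r*a*c" "r*dB + D"] den by simp
  qed
  have eqi: "r*a*c = r*dB + D \<longleftrightarrow> r*dB = D"
  proof
    assume "r*a*c = r*dB + D"
    hence "2*D*(r*dB - D) = 0" using id by simp
    thus "r*dB = D" using D0 by simp
  next
    assume "r*dB = D"
    hence "(r*a*c)^2 = (r*dB + D)^2" using id by simp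
    thus "r*a*c = r*dB + D" using M0 den by (simp add: power2_eq_iff_nonneg)
  qed
  have Ga: "Ga = 2*D/(r*a)" using Ga_val h by (simp add: r_def)
  have Gc: "Gc = 2*c*D/(r*dB + D)" using Gc_val h by (simp add: r_def)
  have ra: "r*a > 0" using r pos by simp
  have "Gc \<le> Ga \<longleftrightarrow> (2*c*D)*(r*a) \<le> (2*D)*(r*dB+D)" unfolding Ga Gc using divcmp(1) den ra by blast
  also have "\<dots> \<longleftrightarrow> (2*D)*(r*a*c) \<le> (2*D)*(r*dB+D)" by (simp add: algebra_simps)
  also have "\<dots> \<longleftrightarrow> r*a*c \<le> r*dB + D" by (rule mult_le_cancel_left_pos) (use D0 in simp)
  finally show "Ga \<ge> Gc" using ge by simp
  have "Gc = Ga \<longleftrightarrow> (2*c*D)*(r*a) = (2*D)*(r*dB+D)" unfolding Ga Gc using divcmp(3) den ra by blast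
  also have "\<dots> \<longleftrightarrow> (2*D)*(r*a*c) = (2*D)*(r*dB+D)" by (simp add: algebra_simps)
  also have "\<dots> \<longleftrightarrow> r*a*c = r*dB + D" using D0 by simp
  finally show "Ga = Gc \<longleftrightarrow> sqrt 3 * dB = D" using eqi by (auto simp: r_def)
qed

lemma C3: assumes h: "sqrt 3 * dB \<ge> D"
  shows "Gb < Gc \<longleftrightarrow> 2*dA + b*c > 0" "Gb = Gc \<longleftrightarrow> 2*dA + b*c = 0"
proof -
  define r where "r = sqrt 3"
  have r: "r > 0" "r*r = 3" using pos by (auto simp: r_def)
  have h': "r*dB \<ge> D" using h by (simp add: r_def)
  have denB: "r*dB + D > 0" using h' D0 by linarith
  have denC: "r*dC + D > 0" using gam D0 by (simp add: r_def)
  have Gb: "Gb = 2*b*D/(r*dC + D)" using Gb_val by (simp add: r_def)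
  have Gc: "Gc = 2*c*D/(r*dB + D)" using Gc_val h by (simp add: r_def)
  have F: "c*(r*dC + D) - b*(r*dB + D) = (b - c)*(r*(b*c + dA) - D)"
  proof -
    have e1: "dC = b^2 - dA" and e2: "dB = c^2 - dA" using s1 s3 by linarith+
    show ?thesis unfolding e1 e2 by (simp add: power2_eq_square algebra_simps)
  qed
  have bcp: "b*c > 0" using bc c0 by simp
  have "D^2 > 0" using D0 by simp
  hence "dA^2 < b^2*c^2" using l1 by linarith
  hence "dA^2 < (b*c)^2" by (simp add: power_mult_distrib)
  hence "\<bar>dA\<bar> < b*c" using power_less_imp_less_base[of "\<bar>dA\<bar>" 2 "b*c"] bcp by simp
  hence p1: "b*c + dA > 0" by linarith
  define K where "K = r*(b*c + dA)"
  have K0: "K > 0" using p1 r by (simp add: K_def)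
  have idK: "K^2 - D^2 = 2*(b*c + dA)*(b*c + 2*dA)" unfolding K_def using l1 r(2) by algebra
  have KD1: "K > D \<longleftrightarrow> b*c + 2*dA > 0"
  proof
    assume "K > D"
    hence "D^2 < K^2" using D0 by (simp add: power_strict_mono)
    hence "2*(b*c + dA)*(b*c + 2*dA) > 0" using idK by linarith
    thus "b*c + 2*dA > 0" using p1 by (simp add: zero_less_mult_iff)
  next
    assume "b*c + 2*dA > 0"
    hence "2*(b*c + dA)*(b*c + 2*dA) > 0" using p1 by simp
    hence "D^2 < K^2" using idK by linarith
    thus "K > D" using power_less_imp_less_base[of D 2 K] K0 by simp
  qed
  have KD2: "K = D \<longleftrightarrow> b*c + 2*dA = 0"
  proof
    assume "K = D"
    hence "2*(b*c + dA)*(b*c + 2*dA) = 0" using idK by simp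
    thus "b*c + 2*dA = 0" using p1 by simp
  next
    assume "b*c + 2*dA = 0"
    hence "K^2 = D^2" using idK by simp
    thus "K = D" using K0 D0 by (simp add: power2_eq_iff_nonneg)
  qed
  have bmc: "b - c > 0" using bc by simp
  have "Gb < Gc \<longleftrightarrow> (2*b*D)*(r*dB+D) < (2*c*D)*(r*dC+D)" unfolding Gb Gc using divcmp(2) denB denC by blast
  also have "\<dots> \<longleftrightarrow> (2*D)*(b*(r*dB+D)) < (2*D)*(c*(r*dC+D))" by (simp add: algebra_simps)
  also have "\<dots> \<longleftrightarrow> b*(r*dB+D) < c*(r*dC+D)" by (rule mult_less_cancel_left_pos) (use D0 in simp)
  also have "\<dots> \<longleftrightarrow> 0 < (b - c)*(r*(b*c + dA) - D)" using F by linarith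
  also have "\<dots> \<longleftrightarrow> K > D" using bmc by (simp add: zero_less_mult_iff K_def)
  finally show "Gb < Gc \<longleftrightarrow> 2*dA + b*c > 0" using KD1 by (simp add: add.commute)
  have "Gb = Gc \<longleftrightarrow> (2*b*D)*(r*dB+D) = (2*c*D)*(r*dC+D)" unfolding Gb Gc using divcmp(3) denB denC by blast
  also have "\<dots> \<longleftrightarrow> (2*D)*(b*(r*dB+D)) = (2*D)*(c*(r*dC+D))" by (simp add: algebra_simps)
  also have "\<dots> \<longleftrightarrow> b*(r*dB+D) = c*(r*dC+D)" using D0 by simp
  also have "\<dots> \<longleftrightarrow> 0 = (b - c)*(r*(b*c + dA) - D)" using F by linarith
  also have "\<dots> \<longleftrightarrow> K = D" using bmc by (simp add: K_def)
  finally show "Gb = Gc \<longleftrightarrow> 2*dA + b*c = 0" using KD2 by (simp add: add.commute)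
qed

lemma C4: assumes h: "2*dA + b*c \<le> 0" shows "sqrt 3 * dB > D"
proof -
  have e: "2*dB = a^2 + c^2 - b^2" using s1 s2 s3 by linarith
  have a2: "a^2 \<ge> b^2 + c^2 + b*c" using s1 s2 s3 h by linarith
  have g: "2*dB > a*c"
  proof (cases "a < 2*c + b")
    case True
    have "a*c < (2*c + b)*c" using True c0 by (simp add: mult_strict_right_mono)
    thus ?thesis using e a2 by (simp add: power2_eq_square algebra_simps)
  next
    case False
    have "a*(a - c) \<ge> (2*c + b)*(c + b)" using False c0 bc by (intro mult_mono) auto
    thus ?thesis using e bc c0 by (simp add: power2_eq_square algebra_simps) (smt (verit) mult_pos_pos)
  qed
  have acp: "a*c > 0" using pos c0 by simp
  have "(a*c)^2 < (2*dB)^2" by (rule power_strict_mono[OF g]) (use acp in auto)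
  hence "D^2 < 3*dB^2" using l2 by (simp add: power_mult_distrib)
  thus ?thesis using pos_gt D0 g acp by simp
qed

end




lemma eq_area:
  assumes "equilateral P Q R"
  shows "tri_area P Q R = sqrt 3 / 4 * (dist P Q)^2"
proof -
  define s where "s = dist P Q"
  have s0: "s \<ge> 0" by (simp add: s_def)
  have e1: "(Re P - Re Q)^2 + (Im P - Im Q)^2 = s^2" using dist_sq[of P Q] s_def by simp
  have e2: "(Re Q - Re R)^2 + (Im Q - Im R)^2 = s^2" using dist_sq[of Q R] s_def assms
    unfolding equilateral_def by simp
  have e3: "(Re R - Re P)^2 + (Im R - Im P)^2 = s^2" using dist_sq[of R P] s_def assms
    unfolding equilateral_def by simp
  define z where "z = Im ((Q - P) * cnj (R - P))"
  have z: "z = (Im Q - Im P) * (Re R - Re P) - (Re Q - Re P) * (Im R - Im P)"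
    by (simp add: z_def algebra_simps)
  have "z^2 = 3/4 * (s^2)^2"
    unfolding z using e1 e2 e3 by (simp add: power2_eq_square) algebra
  hence "\<bar>z\<bar> = sqrt (3/4 * (s^2)^2)" by (metis real_sqrt_abs)
  also have "\<dots> = sqrt (3/4) * sqrt ((s^2)^2)" by (rule real_sqrt_mult)
  also have "\<dots> = sqrt 3 / 2 * s^2" using real_sqrt_abs[of "s^2"] by (simp add: real_sqrt_divide)
  finally show ?thesis unfolding tri_area_def z_def[symmetric] s_def by simp
qed

lemma side_sup:
  fixes U V W :: complex
  assumes nc: "Im ((V-U) * cnj (W-U)) \<noteq> 0"
  defines "L \<equiv> cmod (V-U)" and "dU \<equiv> (W-U) \<bullet> (V-U)" and "dV \<equiv> (W-V) \<bullet> (U-V)"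
    and "D \<equiv> \<bar>Im ((V-U) * cnj (W-U))\<bar>"
  shows "(\<exists>P Q R. ins3 U V W P Q R) \<longleftrightarrow> (sqrt 3 * dU \<ge> D \<or> sqrt 3 * dV \<ge> D)"
    and "(sqrt 3 * dU \<ge> D \<or> sqrt 3 * dV \<ge> D) \<Longrightarrow>
         Sup {tri_area P Q R | P Q R. ins3 U V W P Q R} = sqrt 3 / 4 * (max (gfun L dU D) (gfun L dV D))^2"
proof -
  note g1 = general_side(1)[OF nc, folded L_def dU_def dV_def D_def]
  note g2 = general_side(2)[OF nc, folded L_def dU_def dV_def D_def]
  show "(\<exists>P Q R. ins3 U V W P Q R) \<longleftrightarrow> (sqrt 3 * dU \<ge> D \<or> sqrt 3 * dV \<ge> D)"
    using g1 g2 by blast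
  assume adm: "sqrt 3 * dU \<ge> D \<or> sqrt 3 * dV \<ge> D"
  define G where "G = max (gfun L dU D) (gfun L dV D)"
  show "Sup {tri_area P Q R | P Q R. ins3 U V W P Q R} = sqrt 3 / 4 * (max (gfun L dU D) (gfun L dV D))^2"
    unfolding G_def[symmetric]
  proof (rule cSup_eq_maximum)
    obtain P Q R where i: "ins3 U V W P Q R" and d: "dist P Q = G" using g2[OF adm] G_def by blast
    have "tri_area P Q R = sqrt 3 / 4 * G^2" using eq_area i d unfolding ins3_def by auto
    thus "sqrt 3 / 4 * G^2 \<in> {tri_area P Q R | P Q R. ins3 U V W P Q R}" using i by (metis (mono_tags, lifting) mem_Collect_eq)
  next
    fix x assume "x \<in> {tri_area P Q R | P Q R. ins3 U V W P Q R}"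
    then obtain P Q R where i: "ins3 U V W P Q R" and x: "x = tri_area P Q R" by blast
    have d: "dist P Q \<le> G" using g1[OF i] G_def by simp
    have "(dist P Q)^2 \<le> G^2" by (rule power_mono[OF d]) simp
    thus "x \<le> sqrt 3 / 4 * G^2" using eq_area i x unfolding ins3_def by auto
  qed
qed

lemma lagr: "((x::complex) \<bullet> y)^2 + (Im (x * cnj y))^2 = (cmod x)^2 * (cmod y)^2"
  by (simp add: inner_complex_def cmod_power2) (simp add: power2_eq_square algebra_simps)

lemma arccos_facts:
  fixes x :: real
  assumes "\<bar>x\<bar> \<le> 1"
  shows "arccos x = pi/3 \<longleftrightarrow> x = 1/2" "arccos x < pi/3 \<longleftrightarrow> x > 1/2"
    "arccos x > 2*pi/3 \<longleftrightarrow> x < -1/2" "arccos x = 2*pi/3 \<longleftrightarrow> x = -1/2"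
    "arccos x < 2*pi/3 \<longleftrightarrow> x > -1/2"
proof -
  have h: "arccos (-1/2) = 2*pi/3" using arccos_minus[of "1/2"] by simp
  show "arccos x = pi/3 \<longleftrightarrow> x = 1/2" using arccos_eq_iff[of x "1/2"] assms by simp
  show "arccos x < pi/3 \<longleftrightarrow> x > 1/2" using arccos_less_mono[of x "1/2"] assms by simp
  show "arccos x > 2*pi/3 \<longleftrightarrow> x < -1/2" using arccos_less_mono[of "-1/2" x] assms h by simp
  show "arccos x = 2*pi/3 \<longleftrightarrow> x = -1/2" using arccos_eq_iff[of x "-1/2"] assms h by simp
  show "arccos x < 2*pi/3 \<longleftrightarrow> x > -1/2" using arccos_less_mono[of x "-1/2"] assms h by simp
qed

context tri_facts begin

lemma B1: "2*dB > a*c \<longleftrightarrow> sqrt 3 * dB > D"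
proof
  assume g: "2*dB > a*c"
  have acp: "a*c > 0" using pos c0 by simp
  have "(a*c)^2 < (2*dB)^2" by (rule power_strict_mono[OF g]) (use acp in auto)
  hence "D^2 < 3*dB^2" using l2 by (simp add: power_mult_distrib)
  thus "sqrt 3 * dB > D" using pos_gt D0 g acp by simp
next
  assume g: "sqrt 3 * dB > D"
  hence "sqrt 3 * dB > 0" using D0 by linarith
  hence dp: "dB > 0" using pos(3) by (simp add: zero_less_mult_iff)
  have "D^2 < (sqrt 3 * dB)^2" by (rule power_strict_mono[OF g]) (use D0 in auto)
  hence "D^2 < 3 * dB^2" by (simp add: power_mult_distrib)
  hence "(a*c)^2 < (2*dB)^2" using l2 by (simp add: power_mult_distrib)
  thus "2*dB > a*c" using power_less_imp_less_base[of "a*c" 2 "2*dB"] dp by simp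
qed

lemma B2: "2*dB = a*c \<longleftrightarrow> sqrt 3 * dB = D"
proof
  assume g: "2*dB = a*c"
  have acp: "a*c > 0" using pos c0 by simp
  have "(a*c)^2 = (2*dB)^2" using g by simp
  hence "D^2 = 3*dB^2" using l2 by (simp add: power_mult_distrib)
  hence "D^2 = (sqrt 3 * dB)^2" by (simp add: power_mult_distrib)
  thus "sqrt 3 * dB = D" using g acp D0 by (simp add: power2_eq_iff_nonneg)
next
  assume g: "sqrt 3 * dB = D"
  hence "sqrt 3 * dB > 0" using D0 by linarith
  hence dp: "dB > 0" using pos(3) by (simp add: zero_less_mult_iff)
  have "D^2 = (sqrt 3 * dB)^2" using g by simp
  hence "D^2 = 3 * dB^2" by (simp add: power_mult_distrib)
  hence "(a*c)^2 = (2*dB)^2" using l2 by (simp add: power_mult_distrib)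
  moreover have "a*c \<ge> 0" "2*dB \<ge> 0" using dp pos c0 by auto
  ultimately show "2*dB = a*c" using power2_eq_iff_nonneg[of "a*c" "2*dB"] by simp
qed

end

lemma ins_sides:
  "inscribed_eq_on_side A B C SideA P Q R \<longleftrightarrow> ins3 B C A P Q R"
  "inscribed_eq_on_side A B C SideB P Q R \<longleftrightarrow> ins3 C A B P Q R"
  "inscribed_eq_on_side A B C SideC P Q R \<longleftrightarrow> ins3 A B C P Q R"
  unfolding inscribed_eq_on_side_def ins3_def tri_boundary_def by auto

lemma all_side: "(\<forall>y. P y) \<longleftrightarrow> P SideA \<and> P SideB \<and> P SideC"
  by (metis side.exhaust)

lemma set_side: "{x. P x} = S \<longleftrightarrow> (P SideA \<longleftrightarrow> SideA \<in> S) \<and> (P SideB \<longleftrightarrow> SideB \<in> S) \<and> (P SideC \<longleftrightarrow> SideC \<in> S)"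
  unfolding set_eq_iff mem_Collect_eq using all_side[of "\<lambda>x. P x \<longleftrightarrow> x \<in> S"] by simp




theorem mainTheorem1:
  fixes A B C :: complex
  assumes tri: "\<not> collinear {A, B, C}"
    and sides: "dist B C > dist C A" "dist C A > dist A B"
  defines "\<alpha> \<equiv> tri_angle B A C" and "\<beta> \<equiv> tri_angle C B A"
  shows "max_sides A B C = (if \<beta> = pi / 3 then {SideA, SideC} else {SideA})
         \<and> (\<alpha> > 2 * pi / 3 \<longrightarrow> min_sides A B C = {SideC})
         \<and> (\<alpha> = 2 * pi / 3 \<longrightarrow> min_sides A B C = {SideB, SideC})
         \<and> (pi / 3 < \<alpha> \<and> \<alpha> < 2 * pi / 3 \<and> \<beta> < pi / 3 \<longrightarrow> min_sides A B C = {SideB})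
         \<and> (\<beta> \<ge> pi / 3 \<longrightarrow> min_sides A B C = {SideB})"
proof -
  define a where "a = dist B C"
  define b where "b = dist C A"
  define c where "c = dist A B"
  define dA where "dA = (B-A) \<bullet> (C-A)"
  define dB where "dB = (C-B) \<bullet> (A-B)"
  define dC where "dC = (A-C) \<bullet> (B-C)"
  define k where "k = Im ((B-A) * cnj (C-A))"
  define D where "D = \<bar>k\<bar>"
  have k0: "k \<noteq> 0"
  proof
    assume k: "k = 0"
    have "Im ((C-A)/(B-A)) = 0"
      using k by (simp add: k_def Im_divide algebra_simps)
    hence "(C-A)/(B-A) \<in> \<real>" by (simp add: complex_is_Real_iff)
    hence "collinear {0, B-A, C-A}" by (simp add: collinear_iff_Reals)
    hence "collinear {B, A, C}" by (subst collinear_3) auto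
    thus False using tri by (simp add: insert_commute)
  qed
  have kB: "Im ((C-B) * cnj (A-B)) = k" and kC: "Im ((A-C) * cnj (B-C)) = k"
    by (simp_all add: k_def algebra_simps)
  have D0: "D > 0" using k0 by (simp add: D_def)
  have na: "cmod (C-B) = a" "cmod (B-C) = a" by (simp_all add: a_def dist_norm norm_minus_commute)
  have nb: "cmod (A-C) = b" "cmod (C-A) = b" by (simp_all add: b_def dist_norm norm_minus_commute)
  have nc: "cmod (B-A) = c" "cmod (A-B) = c" by (simp_all add: c_def dist_norm norm_minus_commute)
  have ip: "(A-B) \<bullet> (C-B) = dB" "(B-C) \<bullet> (A-C) = dC" "(C-A) \<bullet> (B-A) = dA"
    by (simp_all add: dA_def dB_def dC_def inner_commute)
  have AB: "A \<noteq> B" proof assume "A = B" hence "collinear {A,B,C}" by simp thus False using tri by simp qed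
  interpret T: tri_facts a b c dA dB dC D
  proof
    show "a > b" "b > c" using sides by (simp_all add: a_def b_def c_def)
    show "c > 0" using AB by (simp add: c_def)
    show "D > 0" by (rule D0)
    show "dA + dB = c^2" using dsum[of C A B] nc unfolding ip(3)[symmetric] dB_def by simp
    show "dB + dC = a^2" using dsum[of A B C] na unfolding ip(1)[symmetric] dC_def by simp
    show "dA + dC = b^2" using dsum[of B C A] nb unfolding ip(2)[symmetric] dA_def by simp
    show "dA^2 + D^2 = b^2 * c^2" using lagr[of "B-A" "C-A"] nb nc
      unfolding dA_def[symmetric] k_def[symmetric] D_def by (simp add: mult.commute)
    show "dB^2 + D^2 = a^2 * c^2" using lagr[of "C-B" "A-B"] na nc kB
      unfolding dB_def[symmetric] D_def by simp
    show "dC^2 + D^2 = a^2 * b^2" using lagr[of "A-C" "B-C"] na nb kC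
      unfolding dC_def[symmetric] D_def by (simp add: mult.commute)
  qed
  have al: "\<alpha> = arccos (dA/(c*b))" unfolding \<alpha>_def tri_angle_def vec_angle_def dA_def[symmetric]
    using nc(1) nb(2) by simp
  have be: "\<beta> = arccos (dB/(a*c))" unfolding \<beta>_def tri_angle_def vec_angle_def dB_def[symmetric]
    using na(1) nc(2) by simp
  have bcp: "b*c > 0" "a*c > 0" using T.pos T.c0 by auto
  have xA: "\<bar>dA/(c*b)\<bar> \<le> 1"
  proof -
    have "dA^2 \<le> (b*c)^2" using T.l1 by (simp add: power_mult_distrib) (smt (verit) zero_le_power2)
    hence "\<bar>dA\<bar> \<le> b*c" using power2_le_imp_le[of "\<bar>dA\<bar>" "b*c"] bcp by simp
    thus ?thesis using bcp by (simp add: abs_div mult.commute)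
  qed
  have xB: "\<bar>dB/(a*c)\<bar> \<le> 1"
  proof -
    have "dB^2 \<le> (a*c)^2" using T.l2 by (simp add: power_mult_distrib) (smt (verit) zero_le_power2)
    hence "\<bar>dB\<bar> \<le> a*c" using power2_le_imp_le[of "\<bar>dB\<bar>" "a*c"] bcp by simp
    thus ?thesis using bcp by (simp add: abs_div)
  qed
  have eqb: "\<beta> = pi/3 \<longleftrightarrow> sqrt 3 * dB = D"
  proof -
    have "\<beta> = pi/3 \<longleftrightarrow> dB/(a*c) = 1/2" using arccos_facts(1)[OF xB] be by simp
    also have "\<dots> \<longleftrightarrow> 2*dB = a*c" using bcp by (auto simp: field_simps)
    finally show ?thesis using T.B2 by simp
  qed
  have ltb: "\<beta> < pi/3 \<longleftrightarrow> sqrt 3 * dB > D"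
  proof -
    have "\<beta> < pi/3 \<longleftrightarrow> dB/(a*c) > 1/2" using arccos_facts(2)[OF xB] be by simp
    also have "\<dots> \<longleftrightarrow> 2*dB > a*c" using bcp by (auto simp: field_simps)
    finally show ?thesis using T.B1 by simp
  qed
  have gta: "\<alpha> > 2*pi/3 \<longleftrightarrow> 2*dA + b*c < 0"
  proof -
    have "\<alpha> > 2*pi/3 \<longleftrightarrow> dA/(c*b) < -1/2" using arccos_facts(3)[OF xA] al by simp
    also have "\<dots> \<longleftrightarrow> 2*dA + b*c < 0" using bcp by (auto simp: field_simps)
    finally show ?thesis .
  qed
  have eqa: "\<alpha> = 2*pi/3 \<longleftrightarrow> 2*dA + b*c = 0"
  proof -
    have "\<alpha> = 2*pi/3 \<longleftrightarrow> dA/(c*b) = -1/2" using arccos_facts(4)[OF xA] al by simp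
    also have "\<dots> \<longleftrightarrow> dA = -1/2 * (c*b)" using T.pos T.c0 by (simp add: divide_eq_eq)
    also have "\<dots> \<longleftrightarrow> 2*dA + b*c = 0" by (simp only: mult.commute[of c b]) linarith
    finally show ?thesis .
  qed
  have lta: "\<alpha> < 2*pi/3 \<longleftrightarrow> 2*dA + b*c > 0"
  proof -
    have "\<alpha> < 2*pi/3 \<longleftrightarrow> dA/(c*b) > -1/2" using arccos_facts(5)[OF xA] al by simp
    also have "\<dots> \<longleftrightarrow> 2*dA + b*c > 0" using bcp by (auto simp: field_simps)
    finally show ?thesis .
  qed
  have k0': "Im ((C-B) * cnj (A-B)) \<noteq> 0" "Im ((A-C) * cnj (B-C)) \<noteq> 0" "Im ((B-A) * cnj (C-A)) \<noteq> 0"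
    using kB kC k0 k_def by auto
  have DD: "\<bar>Im ((C-B) * cnj (A-B))\<bar> = D" "\<bar>Im ((A-C) * cnj (B-C))\<bar> = D" "\<bar>Im ((B-A) * cnj (C-A))\<bar> = D"
    using kB kC by (simp_all add: D_def k_def)
  have ip2: "(A-C) \<bullet> (B-C) = dC" "(B-A) \<bullet> (C-A) = dA" "(C-B) \<bullet> (A-B) = dB"
    by (simp_all add: dA_def dB_def dC_def)
  have GaD: "max (gfun a dB D) (gfun a dC D) = T.Ga" by (simp add: T.Ga_def)
  have GbD: "max (gfun b dC D) (gfun b dA D) = T.Gb" by (simp add: T.Gb_def)
  have GcD: "max (gfun c dA D) (gfun c dB D) = T.Gc" by (simp add: T.Gc_def)
  note sA = side_sup[OF k0'(1), unfolded na ip ip2 DD GaD]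
  note sB = side_sup[OF k0'(2), unfolded nb ip ip2 DD GbD]
  note sC = side_sup[OF k0'(3), unfolded nc ip ip2 DD GcD]
  have gC: "sqrt 3 * dC \<ge> D" using T.gam by simp
  have aA: "sqrt 3 * dB \<ge> D \<or> sqrt 3 * dC \<ge> D" using gC by simp
  have aB: "sqrt 3 * dC \<ge> D \<or> sqrt 3 * dA \<ge> D" using gC by simp
  have aC: "(sqrt 3 * dA \<ge> D \<or> sqrt 3 * dB \<ge> D) \<longleftrightarrow> sqrt 3 * dB \<ge> D" using T.alp by auto
  have admA: "admits_eq A B C SideA" using sA(1) aA by (simp add: admits_eq_def ins_sides)
  have admB: "admits_eq A B C SideB" using sB(1) aB by (simp add: admits_eq_def ins_sides)
  have admC: "admits_eq A B C SideC \<longleftrightarrow> sqrt 3 * dB \<ge> D" using sC(1) aC by (simp add: admits_eq_def ins_sides)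
  have mA: "max_eq_area A B C SideA = sqrt 3 / 4 * T.Ga^2" using sA(2)[OF aA] by (simp add: max_eq_area_def ins_sides)
  have mB: "max_eq_area A B C SideB = sqrt 3 / 4 * T.Gb^2" using sB(2)[OF aB] by (simp add: max_eq_area_def ins_sides)
  have mC: "sqrt 3 * dB \<ge> D \<Longrightarrow> max_eq_area A B C SideC = sqrt 3 / 4 * T.Gc^2"
    using sC(2) aC by (simp add: max_eq_area_def ins_sides)
  have fm: "\<And>x y::real. 0 \<le> x \<Longrightarrow> 0 \<le> y \<Longrightarrow>
      (sqrt 3 / 4 * x^2 \<le> sqrt 3 / 4 * y^2 \<longleftrightarrow> x \<le> y) \<and> (sqrt 3 / 4 * x^2 = sqrt 3 / 4 * y^2 \<longleftrightarrow> x = y)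
      \<and> (sqrt 3 / 4 * x^2 < sqrt 3 / 4 * y^2 \<longleftrightarrow> x < y)"
  proof -
    fix x y :: real assume xy: "0 \<le> x" "0 \<le> y"
    have l: "x^2 \<le> y^2 \<longleftrightarrow> x \<le> y" using xy by (simp add: power_mono_iff)
    have l2: "y^2 \<le> x^2 \<longleftrightarrow> y \<le> x" using xy by (simp add: power_mono_iff)
    have e: "x^2 = y^2 \<longleftrightarrow> x = y" using xy by (simp add: power2_eq_iff_nonneg)
    have p: "sqrt 3 / 4 > (0::real)" by simp
    have m1: "sqrt 3 / 4 * x^2 \<le> sqrt 3 / 4 * y^2 \<longleftrightarrow> x^2 \<le> y^2" using p by (rule mult_le_cancel_left_pos)
    have m2: "sqrt 3 / 4 * x^2 < sqrt 3 / 4 * y^2 \<longleftrightarrow> x^2 < y^2" using p by (rule mult_less_cancel_left_pos)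
    have m3: "sqrt 3 / 4 * x^2 = sqrt 3 / 4 * y^2 \<longleftrightarrow> x^2 = y^2" using p by simp
    have l3: "x^2 < y^2 \<longleftrightarrow> x < y" using l2 by (simp add: not_le[symmetric] del: not_le)
    show "(sqrt 3 / 4 * x^2 \<le> sqrt 3 / 4 * y^2 \<longleftrightarrow> x \<le> y) \<and> (sqrt 3 / 4 * x^2 = sqrt 3 / 4 * y^2 \<longleftrightarrow> x = y)
      \<and> (sqrt 3 / 4 * x^2 < sqrt 3 / 4 * y^2 \<longleftrightarrow> x < y)"
      using m1 m2 m3 l l3 e by simp
  qed
  have Gb0: "T.Gb \<ge> 0" using T.Gb_pos by simp
  have Ga0: "T.Ga \<ge> 0" using T.Gb_pos T.C1 by simp
  have Gc0: "T.Gc \<ge> 0" if h: "sqrt 3 * dB \<ge> D"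
  proof -
    have "sqrt 3 * dB + D > 0" using h T.D0 by linarith
    thus ?thesis using T.Gc_val[OF h] T.D0 T.c0 by simp
  qed
  define mA where "mA = max_eq_area A B C SideA"
  define mB where "mB = max_eq_area A B C SideB"
  define mC where "mC = max_eq_area A B C SideC"
  have c1: "mB < mA"
  proof -
    have "sqrt 3/4*T.Gb^2 < sqrt 3/4*T.Ga^2" using fm[OF Gb0 Ga0] T.C1 by blast
    thus ?thesis by (simp only: mA_def mB_def mA mB)
  qed
  have c2: "mC \<le> mA \<and> (mC = mA \<longleftrightarrow> sqrt 3 * dB = D)" if h: "sqrt 3 * dB \<ge> D"
  proof -
    note f = fm[OF Gc0[OF h] Ga0]
    have e1: "sqrt 3/4*T.Gc^2 \<le> sqrt 3/4*T.Ga^2" using f T.C2(1)[OF h] by blast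
    have g2: "T.Gc = T.Ga \<longleftrightarrow> sqrt 3 * dB = D" using T.C2(2)[OF h] by linarith
    have e2: "sqrt 3/4*T.Gc^2 = sqrt 3/4*T.Ga^2 \<longleftrightarrow> sqrt 3 * dB = D" using f g2 by blast
    have q: "mC = sqrt 3/4*T.Gc^2" "mA = sqrt 3/4*T.Ga^2" by (simp only: mA_def mC_def mA mC[OF h])+
    show ?thesis unfolding q using e1 e2 by blast
  qed
  have c3: "(mB < mC \<longleftrightarrow> 2*dA + b*c > 0) \<and> (mB = mC \<longleftrightarrow> 2*dA + b*c = 0)" if h: "sqrt 3 * dB \<ge> D"
  proof -
    note f = fm[OF Gb0 Gc0[OF h]]
    have e1: "sqrt 3/4*T.Gb^2 < sqrt 3/4*T.Gc^2 \<longleftrightarrow> 2*dA + b*c > 0" using f T.C3(1)[OF h] by blast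
    have e2: "sqrt 3/4*T.Gb^2 = sqrt 3/4*T.Gc^2 \<longleftrightarrow> 2*dA + b*c = 0" using f T.C3(2)[OF h] by blast
    have q: "mC = sqrt 3/4*T.Gc^2" "mB = sqrt 3/4*T.Gb^2" by (simp only: mB_def mC_def mB mC[OF h])+
    show ?thesis unfolding q using e1 e2 by blast
  qed
  have MS: "max_sides A B C = {x. admits_eq A B C x \<and> (admits_eq A B C SideA \<longrightarrow> max_eq_area A B C SideA \<le> max_eq_area A B C x)
     \<and> (admits_eq A B C SideB \<longrightarrow> max_eq_area A B C SideB \<le> max_eq_area A B C x)
     \<and> (admits_eq A B C SideC \<longrightarrow> max_eq_area A B C SideC \<le> max_eq_area A B C x)}"
    unfolding max_sides_def all_side by simp
  have NS: "min_sides A B C = {x. admits_eq A B C x \<and> (admits_eq A B C SideA \<longrightarrow> max_eq_area A B C x \<le> max_eq_area A B C SideA)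
     \<and> (admits_eq A B C SideB \<longrightarrow> max_eq_area A B C x \<le> max_eq_area A B C SideB)
     \<and> (admits_eq A B C SideC \<longrightarrow> max_eq_area A B C x \<le> max_eq_area A B C SideC)}"
    unfolding min_sides_def all_side by simp
  have P1: "max_sides A B C = (if \<beta> = pi / 3 then {SideA, SideC} else {SideA})"
  proof (cases "sqrt 3 * dB \<ge> D")
    case True
    show ?thesis unfolding MS set_side mA_def[symmetric] mB_def[symmetric] mC_def[symmetric]
      using admA admB admC c1 c2[OF True] eqb True by auto
  next
    case False
    show ?thesis unfolding MS set_side mA_def[symmetric] mB_def[symmetric] mC_def[symmetric]
      using admA admB admC c1 eqb False by auto
  qed
  have P2: "\<alpha> > 2 * pi / 3 \<longrightarrow> min_sides A B C = {SideC}"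
  proof
    assume "\<alpha> > 2 * pi / 3"
    hence h: "2*dA + b*c < 0" using gta by simp
    hence hb: "sqrt 3 * dB > D" using T.C4 by simp
    hence hb': "sqrt 3 * dB \<ge> D" by simp
    show "min_sides A B C = {SideC}" unfolding NS set_side mA_def[symmetric] mB_def[symmetric] mC_def[symmetric]
      using admA admB admC c1 c2[OF hb'] c3[OF hb'] h hb by auto
  qed
  have P3: "\<alpha> = 2 * pi / 3 \<longrightarrow> min_sides A B C = {SideB, SideC}"
  proof
    assume "\<alpha> = 2 * pi / 3"
    hence h: "2*dA + b*c = 0" using eqa by simp
    hence hb: "sqrt 3 * dB > D" using T.C4 by simp
    hence hb': "sqrt 3 * dB \<ge> D" by simp
    show "min_sides A B C = {SideB, SideC}" unfolding NS set_side mA_def[symmetric] mB_def[symmetric] mC_def[symmetric]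
      using admA admB admC c1 c2[OF hb'] c3[OF hb'] h hb by auto
  qed
  have P4: "pi / 3 < \<alpha> \<and> \<alpha> < 2 * pi / 3 \<and> \<beta> < pi / 3 \<longrightarrow> min_sides A B C = {SideB}"
  proof
    assume "pi / 3 < \<alpha> \<and> \<alpha> < 2 * pi / 3 \<and> \<beta> < pi / 3"
    hence h: "2*dA + b*c > 0" and hb: "sqrt 3 * dB > D" using lta ltb by auto
    hence hb': "sqrt 3 * dB \<ge> D" by simp
    show "min_sides A B C = {SideB}" unfolding NS set_side mA_def[symmetric] mB_def[symmetric] mC_def[symmetric]
      using admA admB admC c1 c2[OF hb'] c3[OF hb'] h hb by auto
  qed
  have P5: "\<beta> \<ge> pi / 3 \<longrightarrow> min_sides A B C = {SideB}"
  proof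
    assume "\<beta> \<ge> pi / 3"
    hence hb: "sqrt 3 * dB \<le> D" using ltb by (simp add: not_less[symmetric])
    show "min_sides A B C = {SideB}"
    proof (cases "sqrt 3 * dB = D")
      case True
      hence hb': "sqrt 3 * dB \<ge> D" by simp
      show ?thesis unfolding NS set_side mA_def[symmetric] mB_def[symmetric] mC_def[symmetric]
        using admA admB admC c1 c2[OF hb'] True by auto
    next
      case False
      hence "\<not> sqrt 3 * dB \<ge> D" using hb by simp
      thus ?thesis unfolding NS set_side mA_def[symmetric] mB_def[symmetric] mC_def[symmetric]
        using admA admB admC c1 by auto
    qed
  qed
  show ?thesis using P1 P2 P3 P4 P5 by blast
qed



end
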